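(* Let $\mathcal{A}=\{0,1\}$, contexts $X$ with density $p(x)$, real outcome $Y$ with density $p(y\mid x,a)$, behaviour policy $\pi^b(a\mid x)>0$ for all $a,x$; $p_\pi(x,a,y)=p(y\mid x,a)\pi(a\mid x)p(x)$ with $Y$-marginal $p_\pi(y)$; $\pi^{(a)}(a'\mid x)=\mathbb{1}(a'=a)$; $\rho_{\mathrm{ATE}}(a,x)=\frac{\mathbb{1}(a=1)-\mathbb{1}(a=0)}{\pi^b(a\mid x)}$, $w_{\mathrm{ATE}}(y)=\frac{p_{\pi^{(1)}}(y)-p_{\pi^{(0)}}(y)}{p_{\pi^b}(y)}$, $\mu(a,x)=\mathbb{E}[Y\mid X=x,A=a]$. For a fixed function $\hat\mu$ and i.i.d. $(x_i,a_i,y_i)_{i=1}^n$ from $p_{\pi^b}$ define $$\widehat{\mathrm{ATE}}_{\mathrm{DR}}=\frac1n\sum_i\rho_{\mathrm{ATE}}(a_i,x_i)(y_i-\hat\mu(a_i,x_i))+\frac1n\sum_i(\hat\mu(1,x_i)-\hat\mu(0,x_i)),\quad\widehat{\mathrm{ATE}}_{\mathrm{MR}}=\frac1n\sum_iw_{\mathrm{ATE}}(y_i)y_i$$ (exact weights). Then $$\mathbb{V}[\widehat{\mathrm{ATE}}_{\mathrm{DR}}]-\mathbb{V}[\widehat{\mathrm{ATE}}_{\mathrm{MR}}]\ge\frac1n\mathbb{E}\Big[\mathbb{V}[\rho_{\mathrm{ATE}}(A,X)Y\mid Y]-\mathbb{V}[\rho_{\mathrm{ATE}}(A,X)\mu(A,X)\mid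 X]\Big].$$
   Context: All expectations and variances are under $p_{\pi^b}$. *)

theory Defs
  imports "HOL-Probability.Probability"
begin

text \<open>Actions A = {0,1} are encoded as bool (True = 1, False = 0).
 A single observation is a triple ((x, a), y).\<close>

type_synonym ('x) obs = "('x \<times> bool) \<times> real"

definition ctx :: "'x obs \<Rightarrow> 'x" where "ctx z = fst (fst z)"
definition act :: "'x obs \<Rightarrow> bool" where "act z = snd (fst z)"
definition outc :: "'x obs \<Rightarrow> real" where "outc z = snd z"

definition base :: "'x measure \<Rightarrow> 'x obs measure" where
  "base MX = (MX \<Otimes>\<^sub>M count_space UNIV) \<Otimes>\<^sub>M lborel"

definition joint_dens ::
  "('x \<Rightarrow> real) \<Rightarrow> ('x \<Rightarrow> bool \<Rightarrow> real \<Rightarrow> real) \<Rightarrow> (bool \<Rightarrow> 'x \<Rightarrow> real) \<Rightarrow> 'x obs \<Rightarrow> real" where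
  "joint_dens px py pol z = py (ctx z) (act z) (outc z) * pol (act z) (ctx z) * px (ctx z)"

definition obs_dist ::
  "'x measure \<Rightarrow> ('x \<Rightarrow> real) \<Rightarrow> ('x \<Rightarrow> bool \<Rightarrow> real \<Rightarrow> real) \<Rightarrow> (bool \<Rightarrow> 'x \<Rightarrow> real) \<Rightarrow> 'x obs measure" where
  "obs_dist MX px py pol = density (base MX) (\<lambda>z. ennreal (joint_dens px py pol z))"

definition marg_Y ::
  "'x measure \<Rightarrow> ('x \<Rightarrow> real) \<Rightarrow> ('x \<Rightarrow> bool \<Rightarrow> real \<Rightarrow> real) \<Rightarrow> (bool \<Rightarrow> 'x \<Rightarrow> real) \<Rightarrow> real \<Rightarrow> real" where
  "marg_Y MX px py pol y = (\<integral>x. (\<Sum>a\<in>UNIV. py x a y * pol a x * px x) \<partial>MX)"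

definition pol_det :: "bool \<Rightarrow> bool \<Rightarrow> 'x \<Rightarrow> real" where
  "pol_det a a' x = (if a' = a then 1 else 0)"

definition rho_ATE :: "(bool \<Rightarrow> 'x \<Rightarrow> real) \<Rightarrow> bool \<Rightarrow> 'x \<Rightarrow> real" where
  "rho_ATE pib a x = ((if a then 1 else 0) - (if \<not> a then 1 else 0)) / pib a x"

definition w_ATE ::
  "'x measure \<Rightarrow> ('x \<Rightarrow> real) \<Rightarrow> ('x \<Rightarrow> bool \<Rightarrow> real \<Rightarrow> real) \<Rightarrow> (bool \<Rightarrow> 'x \<Rightarrow> real) \<Rightarrow> real \<Rightarrow> real" where
  "w_ATE MX px py pib y =
     (marg_Y MX px py (pol_det True) y - marg_Y MX px py (pol_det False) y) / marg_Y MX px py pib y"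

definition mu_reg :: "('x \<Rightarrow> bool \<Rightarrow> real \<Rightarrow> real) \<Rightarrow> bool \<Rightarrow> 'x \<Rightarrow> real" where
  "mu_reg py a x = (\<integral>y. y * py x a y \<partial>lborel)"

definition sample_dist :: "nat \<Rightarrow> 'x obs measure \<Rightarrow> (nat \<Rightarrow> 'x obs) measure" where
  "sample_dist n M = PiM {..<n} (\<lambda>_. M)"

definition ATE_DR ::
  "nat \<Rightarrow> (bool \<Rightarrow> 'x \<Rightarrow> real) \<Rightarrow> (bool \<Rightarrow> 'x \<Rightarrow> real) \<Rightarrow> (nat \<Rightarrow> 'x obs) \<Rightarrow> real" where
  "ATE_DR n pib muh s =
     (1 / real n) * (\<Sum>i<n. rho_ATE pib (act (s i)) (ctx (s i)) * (outc (s i) - muh (act (s i)) (ctx (s i))))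
   + (1 / real n) * (\<Sum>i<n. muh True (ctx (s i)) - muh False (ctx (s i)))"

definition ATE_MR :: "nat \<Rightarrow> (real \<Rightarrow> real) \<Rightarrow> (nat \<Rightarrow> 'x obs) \<Rightarrow> real" where
  "ATE_MR n w s = (1 / real n) * (\<Sum>i<n. w (outc (s i)) * outc (s i))"

definition Var :: "'a measure \<Rightarrow> ('a \<Rightarrow> real) \<Rightarrow> real" where
  "Var M f = (\<integral>z. (f z - (\<integral>u. f u \<partial>M))\<^sup>2 \<partial>M)"

definition cond_var :: "'a measure \<Rightarrow> 'a measure \<Rightarrow> ('a \<Rightarrow> real) \<Rightarrow> 'a \<Rightarrow> real" where
  "cond_var M F f = real_cond_exp M F (\<lambda>z. (f z - real_cond_exp M F f z)\<^sup>2)"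

definition sigma_Y :: "'x obs measure \<Rightarrow> 'x obs measure" where
  "sigma_Y M = vimage_algebra (space M) outc borel"
definition sigma_X :: "'x measure \<Rightarrow> 'x obs measure \<Rightarrow> 'x obs measure" where
  "sigma_X MX M = vimage_algebra (space M) ctx MX"

end

theory Submission
  imports Defs
begin


lemma prod_sel2:
  assumes "finite I" "i \<in> I" "j \<in> I" "i \<noteq> j"
  shows "(\<Prod>k\<in>I. (if k = i then a else if k = j then b else (\<lambda>_. 1::real)) (s k)) = a (s i) * b (s j)"
proof -
  have "(\<Prod>k\<in>I. (if k = i then a else if k = j then b else (\<lambda>_. 1::real)) (s k))
     = a (s i) * (\<Prod>k\<in>I - {i}. (if k = i then a else if k = j then b else (\<lambda>_. 1::real)) (s k))"
    using assms by (subst prod.remove[of I i]) auto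
  also have "(\<Prod>k\<in>I - {i}. (if k = i then a else if k = j then b else (\<lambda>_. 1::real)) (s k))
     = b (s j) * (\<Prod>k\<in>I - {i} - {j}. (if k = i then a else if k = j then b else (\<lambda>_. 1::real)) (s k))"
    using assms by (subst prod.remove[of "I - {i}" j]) auto
  also have "(\<Prod>k\<in>I - {i} - {j}. (if k = i then a else if k = j then b else (\<lambda>_. 1::real)) (s k)) = 1"
    by (rule prod.neutral) auto
  finally show ?thesis by simp
qed

lemma var_iid:
  fixes M :: "'a measure" and D :: "'a \<Rightarrow> real"
  assumes P: "prob_space M" and Dm[measurable]: "D \<in> borel_measurable M"
    and D2: "integrable M (\<lambda>z. (D z)\<^sup>2)" and n: "n > 0"
  shows "Var (PiM {..<n} (\<lambda>_. M)) (\<lambda>s. (1 / real n) * (\<Sum>i<n. D (s i))) = Var M D / real n"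
proof -
  interpret M: prob_space M by fact
  interpret PP: product_prob_space "\<lambda>_::nat. M" "{..<n}" by unfold_locales
  let ?P = "PiM {..<n} (\<lambda>_. M)"
  interpret P: prob_space ?P by (rule prob_space_PiM) (rule M.prob_space_axioms)
  define m where "m = (\<integral>z. D z \<partial>M)"
  define C where "C z = D z - m" for z
  have [measurable]: "C \<in> borel_measurable M" unfolding C_def by measurable
  have D1: "integrable M D" using D2 M.square_integrable_imp_integrable Dm by blast
  have C1: "integrable M C" unfolding C_def using D1 by auto
  have C2: "integrable M (\<lambda>z. (C z)\<^sup>2)"
    unfolding C_def power2_eq_square using D2 D1
    by (auto simp: algebra_simps power2_eq_square intro!: Bochner_Integration.integrable_diff Bochner_Integration.integrable_add)
  have C0: "(\<integral>z. C z \<partial>M) = 0" unfolding C_def m_def using D1 by (simp add: M.prob_space)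
  have VC: "Var M D = (\<integral>z. (C z)\<^sup>2 \<partial>M)" unfolding Var_def C_def m_def ..
  have comp: "integrable ?P (\<lambda>s. g (s i))" "(\<integral>s. g (s i) \<partial>?P) = (\<integral>z. g z \<partial>M)"
    if "i < n" "integrable M g" for g :: "'a \<Rightarrow> real" and i
  proof -
    have d: "distr ?P M (\<lambda>s. s i) = M" using PP.PiM_component[of i] that by simp
    have [measurable]: "g \<in> borel_measurable M" using that by auto
    have mi: "(\<lambda>s. s i) \<in> ?P \<rightarrow>\<^sub>M M" using that by (intro measurable_component_singleton) auto
    show "integrable ?P (\<lambda>s. g (s i))"
      using integrable_distr_eq[OF mi, of g] d that by simp
    show "(\<integral>s. g (s i) \<partial>?P) = (\<integral>z. g z \<partial>M)"
      using integral_distr[OF mi, of g] d by simp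
  qed
  have pair: "integrable ?P (\<lambda>s. C (s i) * C (s j))" "(\<integral>s. C (s i) * C (s j) \<partial>?P) = 0"
    if "i < n" "j < n" "i \<noteq> j" for i j
  proof -
    define f where "f = (\<lambda>k. if k = i then C else if k = j then C else (\<lambda>_. 1::real))"
    have fi: "integrable M (f k)" for k unfolding f_def using C1 by auto
    have eq: "(\<Prod>k\<in>{..<n}. f k (s k)) = C (s i) * C (s j)" for s
      unfolding f_def using prod_sel2[of "{..<n}" i j C C s] that by simp
    show "integrable ?P (\<lambda>s. C (s i) * C (s j))"
      using PP.product_integrable_prod[of "{..<n}" f] fi eq by simp
    have "(\<integral>s. C (s i) * C (s j) \<partial>?P) = (\<Prod>k\<in>{..<n}. integral\<^sup>L M (f k))"
      using PP.product_integral_prod[of "{..<n}" f] fi eq by simp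
    also have "\<dots> = 0"
      using that C0 by (intro prod_zero) (auto simp: f_def intro!: bexI[of _ i])
    finally show "(\<integral>s. C (s i) * C (s j) \<partial>?P) = 0" .
  qed
  have diag: "integrable ?P (\<lambda>s. C (s i) * C (s i))" "(\<integral>s. C (s i) * C (s i) \<partial>?P) = Var M D"
    if "i < n" for i
    using comp[OF that C2] VC by (simp_all add: power2_eq_square)
  have allint: "integrable ?P (\<lambda>s. C (s i) * C (s j))" if "i < n" "j < n" for i j
    using pair diag that by (cases "i = j") auto
  have allval: "(\<integral>s. C (s i) * C (s j) \<partial>?P) = (if i = j then Var M D else 0)" if "i < n" "j < n" for i j
    using pair diag that by (cases "i = j") auto
  have mean: "(\<integral>s. (1 / real n) * (\<Sum>i<n. D (s i)) \<partial>?P) = m"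
  proof -
    have "(\<integral>s. (1 / real n) * (\<Sum>i<n. D (s i)) \<partial>?P) = (1 / real n) * (\<Sum>i<n. \<integral>s. D (s i) \<partial>?P)"
      using comp(1)[OF _ D1] by (simp add: Bochner_Integration.integral_sum)
    also have "\<dots> = (1 / real n) * (\<Sum>i<n. m)" using comp(2)[OF _ D1] m_def by simp
    also have "\<dots> = m" using n by simp
    finally show ?thesis .
  qed
  have "Var ?P (\<lambda>s. (1 / real n) * (\<Sum>i<n. D (s i))) = (\<integral>s. ((1 / real n) * (\<Sum>i<n. C (s i)))\<^sup>2 \<partial>?P)"
  proof -
    have "(1 / real n) * (\<Sum>i<n. D (s i)) - m = (1 / real n) * (\<Sum>i<n. C (s i))" for s
      using n by (simp add: C_def sum_subtractf field_simps)
    then show ?thesis unfolding Var_def mean by simp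
  qed
  also have "\<dots> = (\<integral>s. (1 / real n)^2 * (\<Sum>i<n. \<Sum>j<n. C (s i) * C (s j)) \<partial>?P)"
    by (simp add: power2_eq_square sum_product algebra_simps)
  also have "\<dots> = (1 / real n)^2 * (\<Sum>i<n. \<Sum>j<n. \<integral>s. C (s i) * C (s j) \<partial>?P)"
  proof -
    have "(\<integral>s. (\<Sum>i<n. \<Sum>j<n. C (s i) * C (s j)) \<partial>?P) = (\<Sum>i<n. \<integral>s. (\<Sum>j<n. C (s i) * C (s j)) \<partial>?P)"
      using allint by (intro Bochner_Integration.integral_sum Bochner_Integration.integrable_sum) auto
    also have "\<dots> = (\<Sum>i<n. \<Sum>j<n. \<integral>s. C (s i) * C (s j) \<partial>?P)"
      using allint by (intro sum.cong refl Bochner_Integration.integral_sum) auto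
    finally show ?thesis by simp
  qed
  also have "\<dots> = (1 / real n)^2 * (\<Sum>i<n. Var M D)"
    using allval by simp
  also have "\<dots> = Var M D / real n" using n by (simp add: power2_eq_square)
  finally show ?thesis .
qed



lemma ctx_meas[measurable]: "ctx \<in> base MX \<rightarrow>\<^sub>M MX" unfolding ctx_def base_def by measurable
lemma act_meas[measurable]: "act \<in> base MX \<rightarrow>\<^sub>M count_space UNIV" unfolding act_def base_def by measurable
lemma outc_meas[measurable]: "outc \<in> base MX \<rightarrow>\<^sub>M borel" unfolding outc_def base_def by measurable

lemma split_meas:
  fixes F :: "bool \<Rightarrow> 'a \<Rightarrow> real" and MX :: "'a measure"
  assumes "\<And>a. F a \<in> borel_measurable MX"
  shows "(\<lambda>z. F (act z) (ctx z) :: real) \<in> borel_measurable (base MX)"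
proof -
  have [measurable]: "F True \<in> borel_measurable MX" "F False \<in> borel_measurable MX" using assms by auto
  have "(\<lambda>z. F (act z) (ctx z)) = (\<lambda>z. if act z then F True (ctx z) else F False (ctx z))"
    by (auto intro!: ext)
  also have "\<dots> \<in> borel_measurable (base MX)" by measurable
  finally show ?thesis .
qed

lemma split_meas2:
  fixes F :: "bool \<Rightarrow> 'a \<Rightarrow> real" and MX :: "'a measure"
  assumes "\<And>a. F a \<in> borel_measurable MX"
  shows "(\<lambda>xa. F (snd xa) (fst xa) :: real) \<in> borel_measurable (MX \<Otimes>\<^sub>M count_space UNIV)"
proof -
  have [measurable]: "F True \<in> borel_measurable MX" "F False \<in> borel_measurable MX" using assms by auto
  have "(\<lambda>xa. F (snd xa) (fst xa)) = (\<lambda>xa. if snd xa then F True (fst xa) else F False (fst xa))"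
    by (auto intro!: ext)
  also have "\<dots> \<in> borel_measurable (MX \<Otimes>\<^sub>M count_space UNIV)" by measurable
  finally show ?thesis .
qed

locale setting =
  fixes MX :: "'x measure" and px :: "'x \<Rightarrow> real" and py :: "'x \<Rightarrow> bool \<Rightarrow> real \<Rightarrow> real"
    and pib :: "bool \<Rightarrow> 'x \<Rightarrow> real"
  assumes MX: "sigma_finite_measure MX"
    and px_meas[measurable]: "px \<in> borel_measurable MX"
    and px_nonneg: "\<And>x. x \<in> space MX \<Longrightarrow> px x \<ge> 0"
    and px_int: "(\<integral>\<^sup>+x. ennreal (px x) \<partial>MX) = 1"
    and py_meas: "(\<lambda>z. py (ctx z) (act z) (outc z)) \<in> borel_measurable (base MX)"
    and py_nonneg: "\<And>x a y. x \<in> space MX \<Longrightarrow> py x a y \<ge> 0"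
    and py_int: "\<And>x a. x \<in> space MX \<Longrightarrow> (\<integral>\<^sup>+y. ennreal (py x a y) \<partial>lborel) = 1"
    and pib_meas[measurable]: "\<And>a. pib a \<in> borel_measurable MX"
    and pib_pos: "\<And>a x. x \<in> space MX \<Longrightarrow> pib a x > 0"
    and pib_sum: "\<And>x. x \<in> space MX \<Longrightarrow> pib True x + pib False x = 1"
begin

abbreviation "C \<equiv> count_space (UNIV :: bool set)"
abbreviation "XA \<equiv> MX \<Otimes>\<^sub>M C"
abbreviation "B \<equiv> base MX"
abbreviation "J \<equiv> joint_dens px py pib"
abbreviation "M \<equiv> obs_dist MX px py pib"

lemma B_eq: "B = XA \<Otimes>\<^sub>M lborel" unfolding base_def ..

sublocale MX: sigma_finite_measure MX by (rule MX)
sublocale C: finite_measure C by (rule finite_measure_count_space) simp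
sublocale XA: pair_sigma_finite MX C ..
sublocale XAs: sigma_finite_measure XA by (rule XA.sigma_finite_measure_axioms)
sublocale XAY: pair_sigma_finite XA lborel ..

lemma py_meas'[measurable]: "(\<lambda>z. py (fst (fst z)) (snd (fst z)) (snd z)) \<in> borel_measurable (XA \<Otimes>\<^sub>M lborel)"
  using py_meas unfolding ctx_def act_def outc_def base_def .

lemma pib_meas'[measurable]: "(\<lambda>z. pib (snd (fst z)) (fst (fst z))) \<in> borel_measurable (XA \<Otimes>\<^sub>M lborel)"
  using split_meas[of pib MX] unfolding ctx_def act_def base_def by auto

lemma J_meas[measurable]: "J \<in> borel_measurable B"
  unfolding joint_dens_def ctx_def act_def outc_def B_eq by measurable

lemma space_B: "space B = (space MX \<times> UNIV) \<times> UNIV"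
  unfolding B_eq by (simp add: space_pair_measure)

lemma pib_nonneg: "x \<in> space MX \<Longrightarrow> pib a x \<ge> 0"
  using pib_pos[of x a] by simp

lemma J_nonneg: "z \<in> space B \<Longrightarrow> J z \<ge> 0"
  unfolding joint_dens_def space_B ctx_def act_def outc_def
  using py_nonneg px_nonneg by (auto intro!: mult_nonneg_nonneg simp: pib_nonneg)

lemma sets_M[measurable_cong]: "sets M = sets B" unfolding obs_dist_def by simp
lemma space_M: "space M = space B" unfolding obs_dist_def by simp

lemma py_sec_meas[measurable]: "x \<in> space MX \<Longrightarrow> py x a \<in> borel_measurable lborel"
proof -
  assume x: "x \<in> space MX"
  have "(\<lambda>y. ((x, a), y)) \<in> lborel \<rightarrow>\<^sub>M XA \<Otimes>\<^sub>M lborel"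
    by (rule measurable_Pair1') (simp add: space_pair_measure x)
  from measurable_compose[OF this py_meas']
  have "(\<lambda>y. (\<lambda>z. py (fst (fst z)) (snd (fst z)) (snd z)) ((x, a), y)) \<in> borel_measurable lborel" .
  then show ?thesis by simp
qed

lemma py_integral: "x \<in> space MX \<Longrightarrow> (\<integral>y. py x a y \<partial>lborel) = 1"
  using py_int[of x a] py_nonneg[of x a]
  by (subst integral_eq_nn_integral) auto

lemma py_integrable: "x \<in> space MX \<Longrightarrow> integrable lborel (py x a)"
  using py_int[of x a] py_nonneg[of x a]
  by (intro integrableI_nonneg) auto

lemma XA_integral:
  fixes G :: "'x \<times> bool \<Rightarrow> real"
  assumes "integrable XA G"
  shows "integral\<^sup>L XA G = (\<integral>x. G (x, True) + G (x, False) \<partial>MX)"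
proof -
  have "integral\<^sup>L XA G = (\<integral>x. (\<integral>a. G (x, a) \<partial>C) \<partial>MX)"
    using XA.integral_fst'[OF assms] by simp
  also have "\<dots> = (\<integral>x. G (x, True) + G (x, False) \<partial>MX)"
    by (simp add: lebesgue_integral_count_space_finite UNIV_bool add.commute)
  finally show ?thesis .
qed

lemma XA_nn_integral:
  assumes "G \<in> borel_measurable XA"
  shows "integral\<^sup>N XA G = (\<integral>\<^sup>+x. G (x, True) + G (x, False) \<partial>MX)"
proof -
  have "integral\<^sup>N XA G = (\<integral>\<^sup>+x. (\<integral>\<^sup>+a. G (x, a) \<partial>C) \<partial>MX)"
    using C.nn_integral_fst[OF assms] by simp
  also have "\<dots> = (\<integral>\<^sup>+x. G (x, True) + G (x, False) \<partial>MX)"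
    by (simp add: nn_integral_count_space_finite UNIV_bool add.commute)
  finally show ?thesis .
qed

lemma prob: "prob_space M"
proof
  have "emeasure M (space M) = (\<integral>\<^sup>+z. ennreal (J z) \<partial>B)"
    unfolding obs_dist_def by (simp add: emeasure_density space_M)
  also have "\<dots> = (\<integral>\<^sup>+xa. \<integral>\<^sup>+y. ennreal (J (xa, y)) \<partial>lborel \<partial>XA)"
    unfolding B_eq by (rule lborel.nn_integral_fst[symmetric]) (simp add: B_eq[symmetric])
  also have "\<dots> = (\<integral>\<^sup>+xa. ennreal (pib (snd xa) (fst xa) * px (fst xa)) \<partial>XA)"
  proof (rule nn_integral_cong)
    fix xa assume "xa \<in> space XA"
    then have x: "fst xa \<in> space MX" by (auto simp: space_pair_measure)
    have "(\<integral>\<^sup>+y. ennreal (J (xa, y)) \<partial>lborel)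
        = (\<integral>\<^sup>+y. ennreal (pib (snd xa) (fst xa) * px (fst xa)) * ennreal (py (fst xa) (snd xa) y) \<partial>lborel)"
      using x pib_pos[OF x] px_nonneg[OF x] py_nonneg[OF x]
      by (intro nn_integral_cong) (auto simp: joint_dens_def ctx_def act_def outc_def ennreal_mult'[symmetric] mult_ac)
    also have "\<dots> = ennreal (pib (snd xa) (fst xa) * px (fst xa))"
      using x by (subst nn_integral_cmult) (auto simp: py_int)
    finally show "(\<integral>\<^sup>+y. ennreal (J (xa, y)) \<partial>lborel) = ennreal (pib (snd xa) (fst xa) * px (fst xa))" .
  qed
  also have "\<dots> = (\<integral>\<^sup>+x. ennreal (pib True x * px x) + ennreal (pib False x * px x) \<partial>MX)"
  proof -
    have [measurable]: "(\<lambda>xa. pib (snd xa) (fst xa)) \<in> borel_measurable XA" by (rule split_meas2) simp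
    have "(\<lambda>xa. ennreal (pib (snd xa) (fst xa) * px (fst xa))) \<in> borel_measurable XA" by measurable
    from XA_nn_integral[OF this] show ?thesis by simp
  qed
  also have "\<dots> = (\<integral>\<^sup>+x. ennreal (px x) \<partial>MX)"
  proof (rule nn_integral_cong)
    fix x assume x: "x \<in> space MX"
    have "ennreal (pib True x * px x) + ennreal (pib False x * px x) = ennreal ((pib True x + pib False x) * px x)"
      using pib_nonneg[OF x] px_nonneg[OF x] by (simp add: distrib_right)
    then show "ennreal (pib True x * px x) + ennreal (pib False x * px x) = ennreal (px x)"
      using pib_sum[OF x] by simp
  qed
  finally show "emeasure M (space M) = 1" using px_int by simp
qed

sublocale P: prob_space M by (rule prob)

end


context setting begin
lemma J_eq: "J ((x, a), y) = py x a y * pib a x * px x"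
  by (simp add: joint_dens_def ctx_def act_def outc_def)

lemma py_xy[measurable]: "(\<lambda>(x, y). py x a y) \<in> borel_measurable (MX \<Otimes>\<^sub>M lborel)"
proof -
  have "(\<lambda>(x, y). ((x, a), y)) \<in> MX \<Otimes>\<^sub>M lborel \<rightarrow>\<^sub>M XA \<Otimes>\<^sub>M lborel"
    unfolding case_prod_beta'
    by (intro measurable_Pair measurable_fst'' measurable_snd'' measurable_ident_sets refl measurable_const) auto
  from measurable_compose[OF this py_meas'] show ?thesis by (simp add: case_prod_beta')
qed

lemma py_yx[measurable]: "(\<lambda>(y, x). py x a y) \<in> borel_measurable (lborel \<Otimes>\<^sub>M MX)"
proof -
  have "(\<lambda>(y, x). ((x, a), y)) \<in> lborel \<Otimes>\<^sub>M MX \<rightarrow>\<^sub>M XA \<Otimes>\<^sub>M lborel"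
    unfolding case_prod_beta'
    by (intro measurable_Pair measurable_fst'' measurable_snd'' measurable_ident_sets refl measurable_const) auto
  from measurable_compose[OF this py_meas'] show ?thesis by (simp add: case_prod_beta')
qed

lemma mu_meas[measurable]: "mu_reg py a \<in> borel_measurable MX"
  unfolding mu_reg_def
proof (rule lborel.borel_measurable_lebesgue_integral)
  have "(\<lambda>(x, y). py x a y) \<in> borel_measurable (MX \<Otimes>\<^sub>M lborel)" by (rule py_xy)
  then have "(\<lambda>z. snd z * (\<lambda>(x, y). py x a y) z) \<in> borel_measurable (MX \<Otimes>\<^sub>M lborel)" by measurable
  then show "(\<lambda>(x, y). y * py x a y) \<in> borel_measurable (MX \<Otimes>\<^sub>M lborel)"
    by (simp add: case_prod_beta')
qed

lemma marg_meas[measurable]: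
  assumes [measurable]: "\<And>a. pol a \<in> borel_measurable MX"
  shows "marg_Y MX px py pol \<in> borel_measurable lborel"
  unfolding marg_Y_def
proof (rule MX.borel_measurable_lebesgue_integral)
  have [measurable]: "(\<lambda>z. py (snd z) a (fst z)) \<in> borel_measurable (lborel \<Otimes>\<^sub>M MX)" for a
    using py_yx[of a] by (simp add: case_prod_beta')
  show "(\<lambda>(y, x). \<Sum>a\<in>UNIV. py x a y * pol a x * px x) \<in> borel_measurable (lborel \<Otimes>\<^sub>M MX)"
    by (simp add: case_prod_beta' UNIV_bool)
qed

lemma w_meas[measurable]: "w_ATE MX px py pib \<in> borel_measurable lborel"
proof -
  have [measurable]: "\<And>a b. pol_det b a \<in> borel_measurable MX" unfolding pol_det_def by simp
  show ?thesis unfolding w_ATE_def by measurable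
qed

lemma rho_meas[measurable]: "(\<lambda>z. rho_ATE pib (act z) (ctx z)) \<in> borel_measurable B"
  by (rule split_meas) (simp add: rho_ATE_def)

lemma GI:
  assumes F: "integrable M F"
  shows "integral\<^sup>L M F = (\<integral>x. (\<integral>y. J ((x, True), y) * F ((x, True), y) \<partial>lborel)
                               + (\<integral>y. J ((x, False), y) * F ((x, False), y) \<partial>lborel) \<partial>MX)"
proof -
  have Fm[measurable]: "F \<in> borel_measurable B" using borel_measurable_integrable[OF F]
    by (simp only: measurable_cong_sets[OF sets_M refl])
  have nn: "AE z in B. 0 \<le> J z" using J_nonneg by (intro AE_I2) auto
  have i1: "integrable B (\<lambda>z. J z * F z)"
    using F unfolding obs_dist_def by (subst (asm) integrable_density) (auto simp: nn)
  have "integral\<^sup>L M F = integral\<^sup>L B (\<lambda>z. J z * F z)"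
    unfolding obs_dist_def by (subst integral_density) (auto simp: nn)
  also have "\<dots> = (\<integral>xa. (\<integral>y. J (xa, y) * F (xa, y) \<partial>lborel) \<partial>XA)"
    using XAY.integral_fst'[of "\<lambda>z. J z * F z"] i1 unfolding B_eq by simp
  also have "\<dots> = (\<integral>x. (\<integral>y. J ((x, True), y) * F ((x, True), y) \<partial>lborel)
                               + (\<integral>y. J ((x, False), y) * F ((x, False), y) \<partial>lborel) \<partial>MX)"
    using XAY.integrable_fst'[of "\<lambda>z. J z * F z"] i1 unfolding B_eq
    by (subst XA_integral) auto
  finally show ?thesis .
qed

lemma GI_H:
  assumes F: "integrable M (\<lambda>z. H (act z) (ctx z))"
  shows "(\<integral>z. H (act z) (ctx z) \<partial>M) = (\<integral>x. px x * (pib True x * H True x + pib False x * H False x) \<partial>MX)"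
  unfolding GI[OF F]
proof (rule Bochner_Integration.integral_cong[OF refl])
  fix x assume x: "x \<in> space MX"
  have "(\<integral>y. J ((x, a), y) * H (act ((x, a), y)) (ctx ((x, a), y)) \<partial>lborel) = px x * pib a x * H a x" for a
  proof -
    have "(\<integral>y. J ((x, a), y) * H (act ((x, a), y)) (ctx ((x, a), y)) \<partial>lborel)
        = (\<integral>y. (px x * pib a x * H a x) * py x a y \<partial>lborel)"
      by (simp add: J_eq act_def ctx_def mult_ac)
    also have "\<dots> = px x * pib a x * H a x" using py_integral[OF x] by simp
    finally show ?thesis .
  qed
  then show "(\<integral>y. J ((x, True), y) * H (act ((x, True), y)) (ctx ((x, True), y)) \<partial>lborel) +
          (\<integral>y. J ((x, False), y) * H (act ((x, False), y)) (ctx ((x, False), y)) \<partial>lborel) =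
          px x * (pib True x * H True x + pib False x * H False x)"
    by (simp add: algebra_simps)
qed

lemma GI_HY:
  assumes F: "integrable M (\<lambda>z. H (act z) (ctx z) * outc z)"
  shows "(\<integral>z. H (act z) (ctx z) * outc z \<partial>M)
       = (\<integral>x. px x * (pib True x * (H True x * mu_reg py True x) + pib False x * (H False x * mu_reg py False x)) \<partial>MX)"
  unfolding GI[OF F]
proof (rule Bochner_Integration.integral_cong[OF refl])
  fix x assume x: "x \<in> space MX"
  have "(\<integral>y. J ((x, a), y) * (H (act ((x, a), y)) (ctx ((x, a), y)) * outc ((x, a), y)) \<partial>lborel)
         = px x * pib a x * (H a x * mu_reg py a x)" for a
  proof -
    have "(\<integral>y. J ((x, a), y) * (H (act ((x, a), y)) (ctx ((x, a), y)) * outc ((x, a), y)) \<partial>lborel)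
        = (\<integral>y. (px x * pib a x * H a x) * (y * py x a y) \<partial>lborel)"
      by (simp add: J_eq act_def ctx_def outc_def mult_ac)
    also have "\<dots> = (px x * pib a x * H a x) * mu_reg py a x"
      unfolding mu_reg_def by (rule integral_mult_right_zero)
    also have "\<dots> = px x * pib a x * (H a x * mu_reg py a x)" by simp
    finally show ?thesis .
  qed
  then show "(\<integral>y. J ((x, True), y) * (H (act ((x, True), y)) (ctx ((x, True), y)) * outc ((x, True), y)) \<partial>lborel) +
          (\<integral>y. J ((x, False), y) * (H (act ((x, False), y)) (ctx ((x, False), y)) * outc ((x, False), y)) \<partial>lborel) =
          px x * (pib True x * (H True x * mu_reg py True x) + pib False x * (H False x * mu_reg py False x))"
    by (simp add: algebra_simps)
qed

lemma tower_mu: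
  assumes "integrable M (\<lambda>z. H (act z) (ctx z) * outc z)"
    and "integrable M (\<lambda>z. H (act z) (ctx z) * mu_reg py (act z) (ctx z))"
  shows "(\<integral>z. H (act z) (ctx z) * outc z \<partial>M) = (\<integral>z. H (act z) (ctx z) * mu_reg py (act z) (ctx z) \<partial>M)"
  using GI_HY[OF assms(1)] GI_H[of "\<lambda>a x. H a x * mu_reg py a x", OF assms(2)] by simp

end


context setting begin

lemma XA_integrable:
  fixes G :: "'x \<times> bool \<Rightarrow> real"
  assumes [measurable]: "G \<in> borel_measurable XA"
    and "integrable MX (\<lambda>x. G (x, True))" "integrable MX (\<lambda>x. G (x, False))"
  shows "integrable XA G"
proof (rule integrableI_bounded)
  show "G \<in> borel_measurable XA" by fact
  have "(\<integral>\<^sup>+xa. ennreal (norm (G xa)) \<partial>XA) = (\<integral>\<^sup>+x. ennreal (norm (G (x, True))) + ennreal (norm (G (x, False))) \<partial>MX)"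
    by (rule XA_nn_integral) measurable
  also have "\<dots> = (\<integral>\<^sup>+x. ennreal (norm (G (x, True))) \<partial>MX) + (\<integral>\<^sup>+x. ennreal (norm (G (x, False))) \<partial>MX)"
    using assms(2,3) by (intro nn_integral_add) auto
  also have "\<dots> < \<infinity>" using assms(2,3) by (simp add: integrable_iff_bounded)
  finally show "(\<integral>\<^sup>+xa. ennreal (norm (G xa)) \<partial>XA) < \<infinity>" .
qed

lemma J_integrable: "integrable (XA \<Otimes>\<^sub>M lborel) J"
proof -
  have "(\<integral>\<^sup>+z. ennreal (J z) \<partial>B) = emeasure M (space M)"
    unfolding obs_dist_def by (simp add: emeasure_density space_M)
  also have "\<dots> = 1" by (rule P.emeasure_space_1)
  finally have "(\<integral>\<^sup>+z. ennreal (J z) \<partial>B) < \<infinity>" by simp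
  then have "integrable B J" using J_nonneg by (intro integrableI_nonneg) (auto intro!: AE_I2)
  then show ?thesis unfolding B_eq .
qed

lemma AE_J: "AE y in lborel. integrable XA (\<lambda>xa. J (xa, y))"
  using XAY.AE_integrable_snd[of "\<lambda>xa y. J (xa, y)"] J_integrable by simp

lemma AE_py: "AE y in lborel. integrable MX (\<lambda>x. py x a y * px x)"
proof -
  interpret MY: pair_sigma_finite MX lborel ..
  have m[measurable]: "(\<lambda>(x, y). py x a y * px x) \<in> borel_measurable (MX \<Otimes>\<^sub>M lborel)"
  proof -
    have "(\<lambda>z. (\<lambda>(x, y). py x a y) z * px (fst z)) \<in> borel_measurable (MX \<Otimes>\<^sub>M lborel)" by measurable
    then show ?thesis by (simp add: case_prod_beta')
  qed
  have "(\<integral>\<^sup>+z. ennreal ((\<lambda>(x, y). py x a y * px x) z) \<partial>(MX \<Otimes>\<^sub>M lborel))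
      = (\<integral>\<^sup>+x. \<integral>\<^sup>+y. ennreal (py x a y * px x) \<partial>lborel \<partial>MX)"
  proof -
    have me: "(\<lambda>z. ennreal ((\<lambda>(x, y). py x a y * px x) z)) \<in> borel_measurable (MX \<Otimes>\<^sub>M lborel)" by measurable
    show ?thesis using lborel.nn_integral_fst[OF me] by simp
  qed
  also have "\<dots> = (\<integral>\<^sup>+x. ennreal (px x) \<partial>MX)"
  proof (rule nn_integral_cong)
    fix x assume x: "x \<in> space MX"
    have "(\<integral>\<^sup>+y. ennreal (py x a y * px x) \<partial>lborel) = (\<integral>\<^sup>+y. ennreal (px x) * ennreal (py x a y) \<partial>lborel)"
      using x px_nonneg[OF x] py_nonneg[OF x] by (intro nn_integral_cong) (simp add: ennreal_mult' mult.commute)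
    also have "\<dots> = ennreal (px x)" using x by (subst nn_integral_cmult) (auto simp: py_int)
    finally show "(\<integral>\<^sup>+y. ennreal (py x a y * px x) \<partial>lborel) = ennreal (px x)" .
  qed
  also have "\<dots> = 1" by (rule px_int)
  finally have "integrable (MX \<Otimes>\<^sub>M lborel) (\<lambda>(x, y). py x a y * px x)"
    using px_nonneg py_nonneg
    by (intro integrableI_nonneg m) (auto intro!: AE_I2 simp: space_pair_measure)
  from MY.AE_integrable_snd[OF this] show ?thesis by simp
qed


lemma pyx_meas[measurable]: "(\<lambda>x. py x a y) \<in> borel_measurable MX"
proof -
  have "(\<lambda>x. (x, y)) \<in> MX \<rightarrow>\<^sub>M MX \<Otimes>\<^sub>M lborel" by (rule measurable_Pair2') simp
  from measurable_compose[OF this py_xy[of a]] show ?thesis by simp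
qed

lemma Jxa_meas[measurable]: "(\<lambda>xa. J (xa, y)) \<in> borel_measurable XA"
proof -
  have "(\<lambda>xa. (xa, y)) \<in> XA \<rightarrow>\<^sub>M XA \<Otimes>\<^sub>M lborel" by (rule measurable_Pair2') simp
  from measurable_compose[OF this J_meas[unfolded B_eq]] show ?thesis by simp
qed

lemma rhoxa_meas[measurable]: "(\<lambda>xa. rho_ATE pib (snd xa) (fst xa)) \<in> borel_measurable XA"
  by (rule split_meas2) (simp add: rho_ATE_def)

definition "q0 y = (\<integral>xa. J (xa, y) \<partial>XA)"
definition "q1 y = (\<integral>xa. J (xa, y) * rho_ATE pib (snd xa) (fst xa) \<partial>XA)"

lemma key_AE: "AE y in lborel. q1 y = w_ATE MX px py pib y * q0 y"
  using AE_J AE_py[of True] AE_py[of False]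
proof eventually_elim
  fix y assume IJ: "integrable XA (\<lambda>xa. J (xa, y))"
    and I1: "integrable MX (\<lambda>x. py x True y * px x)" and I0: "integrable MX (\<lambda>x. py x False y * px x)"
  define p1 where "p1 = marg_Y MX px py (pol_det True) y"
  define p0 where "p0 = marg_Y MX px py (pol_det False) y"
  define pb where "pb = marg_Y MX px py pib y"
  have p1: "p1 = (\<integral>x. py x True y * px x \<partial>MX)"
    unfolding p1_def marg_Y_def by (simp add: pol_det_def UNIV_bool)
  have p0: "p0 = (\<integral>x. py x False y * px x \<partial>MX)"
    unfolding p0_def marg_Y_def by (simp add: pol_det_def UNIV_bool)
  have q0: "q0 y = pb"
    unfolding q0_def pb_def marg_Y_def XA_integral[OF IJ]
    by (simp add: J_eq UNIV_bool add.commute)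
  have IJr: "integrable XA (\<lambda>xa. J (xa, y) * rho_ATE pib (snd xa) (fst xa))"
  proof (rule XA_integrable)
    show "(\<lambda>xa. J (xa, y) * rho_ATE pib (snd xa) (fst xa)) \<in> borel_measurable XA" by measurable
    show "integrable MX (\<lambda>x. J ((x, True), y) * rho_ATE pib (snd (x, True)) (fst (x, True)))"
      by (rule iffD2[OF Bochner_Integration.integrable_cong[OF refl] I1])
        (auto simp: J_eq rho_ATE_def dest: pib_pos[of _ True])
    show "integrable MX (\<lambda>x. J ((x, False), y) * rho_ATE pib (snd (x, False)) (fst (x, False)))"
      by (rule iffD2[OF Bochner_Integration.integrable_cong[OF refl] integrable_minus[OF I0]])
        (auto simp: J_eq rho_ATE_def dest: pib_pos[of _ False])
  qed
  have q1: "q1 y = p1 - p0"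
  proof -
    have "q1 y = (\<integral>x. py x True y * px x - py x False y * px x \<partial>MX)"
      unfolding q1_def XA_integral[OF IJr]
      by (rule Bochner_Integration.integral_cong[OF refl])
        (auto simp: J_eq rho_ATE_def dest: pib_pos[of _ True] pib_pos[of _ False])
    also have "\<dots> = p1 - p0" unfolding p1 p0 using I1 I0 by simp
    finally show ?thesis .
  qed
  show "q1 y = w_ATE MX px py pib y * q0 y"
  proof (cases "pb = 0")
    case False
    then show ?thesis unfolding q0 q1 w_ATE_def p1_def[symmetric] p0_def[symmetric] pb_def[symmetric] by simp
  next
    case True
    define h where "h x = py x True y * pib True x * px x + py x False y * pib False x * px x" for x
    have hm[measurable]: "h \<in> borel_measurable MX" unfolding h_def by measurable
    have hnn: "x \<in> space MX \<Longrightarrow> 0 \<le> py x a y * pib a x * px x" for x a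
      using py_nonneg px_nonneg pib_nonneg by (auto intro!: mult_nonneg_nonneg)
    have hI: "integrable MX h"
    proof (rule Bochner_Integration.integrable_bound[OF Bochner_Integration.integrable_add[OF I1 I0] hm])
      show "AE x in MX. norm (h x) \<le> norm (py x True y * px x + py x False y * px x)"
      proof (rule AE_I2)
        fix x assume x: "x \<in> space MX"
        have le1: "pib a x \<le> 1" for a using pib_sum[OF x] pib_nonneg[OF x, of True] pib_nonneg[OF x, of False]
          by (cases a) auto
        have "py x a y * pib a x * px x \<le> py x a y * px x" for a
          using mult_left_le[OF le1[of a] mult_nonneg_nonneg[OF py_nonneg[OF x] px_nonneg[OF x]]]
          by (simp add: mult_ac)
        then show "norm (h x) \<le> norm (py x True y * px x + py x False y * px x)"
          unfolding h_def using hnn[OF x] py_nonneg[OF x] px_nonneg[OF x]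
          by (smt (verit, best) mult_nonneg_nonneg real_norm_def)
      qed
    qed
    have "integral\<^sup>L MX h = 0"
      using True unfolding pb_def marg_Y_def h_def by (simp add: UNIV_bool add.commute)
    then have "AE x in MX. h x = 0"
      using integral_nonneg_eq_0_iff_AE[OF hI] hnn unfolding h_def by (auto intro!: AE_I2)
    then have z: "AE x in MX. py x True y * px x = 0 \<and> py x False y * px x = 0"
    proof (rule AE_mp[OF _ AE_I2[OF impI]])
      fix x assume x: "x \<in> space MX" and hx: "h x = 0"
      have "py x True y * pib True x * px x = 0" "py x False y * pib False x * px x = 0"
        using hx hnn[OF x, of True] hnn[OF x, of False] unfolding h_def by linarith+
      then show "py x True y * px x = 0 \<and> py x False y * px x = 0"
        using pib_pos[OF x, of True] pib_pos[OF x, of False] by auto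
    qed
    have "p1 = 0" unfolding p1 using z by (intro integral_eq_zero_AE) auto
    moreover have "p0 = 0" unfolding p0 using z by (intro integral_eq_zero_AE) auto
    ultimately show ?thesis unfolding q0 q1 True by simp
  qed
qed

lemma J_swap_meas: "(\<lambda>(y, xa). J (xa, y)) \<in> borel_measurable (lborel \<Otimes>\<^sub>M XA)"
proof -
  have "(\<lambda>(y, xa). (xa, y)) \<in> lborel \<Otimes>\<^sub>M XA \<rightarrow>\<^sub>M XA \<Otimes>\<^sub>M lborel"
    unfolding case_prod_beta' by (intro measurable_Pair measurable_fst'' measurable_snd'' measurable_ident_sets refl)
  from measurable_compose[OF this J_meas[unfolded B_eq]] show ?thesis by (simp add: case_prod_beta')
qed

lemma q0_meas[measurable]: "q0 \<in> borel_measurable lborel"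
  unfolding q0_def by (rule XA.borel_measurable_lebesgue_integral) (rule J_swap_meas)

lemma q1_meas[measurable]: "q1 \<in> borel_measurable lborel"
  unfolding q1_def
proof (rule XA.borel_measurable_lebesgue_integral)
  have r: "(\<lambda>z. rho_ATE pib (snd (snd z)) (fst (snd z))) \<in> borel_measurable (lborel \<Otimes>\<^sub>M XA)"
    by (rule measurable_compose[OF measurable_snd rhoxa_meas])
  have "(\<lambda>z. (\<lambda>(y, xa). J (xa, y)) z * rho_ATE pib (snd (snd z)) (fst (snd z))) \<in> borel_measurable (lborel \<Otimes>\<^sub>M XA)"
    using J_swap_meas r by (rule borel_measurable_times)
  then show "(\<lambda>(y, xa). J (xa, y) * rho_ATE pib (snd xa) (fst xa)) \<in> borel_measurable (lborel \<Otimes>\<^sub>M XA)"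
    by (simp add: case_prod_beta')
qed

lemma GIy:
  assumes F: "integrable M F"
  shows "integral\<^sup>L M F = (\<integral>y. (\<integral>xa. J (xa, y) * F (xa, y) \<partial>XA) \<partial>lborel)"
proof -
  have Fm[measurable]: "F \<in> borel_measurable B" using borel_measurable_integrable[OF F]
    by (simp only: measurable_cong_sets[OF sets_M refl])
  have nn: "AE z in B. 0 \<le> J z" using J_nonneg by (intro AE_I2) auto
  have i1: "integrable B (\<lambda>z. J z * F z)"
    using F unfolding obs_dist_def by (subst (asm) integrable_density) (auto simp: nn)
  have i2: "integrable (XA \<Otimes>\<^sub>M lborel) (case_prod (\<lambda>xa y. J (xa, y) * F (xa, y)))"
    using i1 unfolding B_eq by (simp add: case_prod_unfold)
  have "integral\<^sup>L M F = integral\<^sup>L B (\<lambda>z. J z * F z)"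
    unfolding obs_dist_def by (subst integral_density) (auto simp: nn)
  also have "\<dots> = (\<integral>y. (\<integral>xa. J (xa, y) * F (xa, y) \<partial>XA) \<partial>lborel)"
    using XAY.integral_snd[OF i2] unfolding B_eq by (simp add: case_prod_unfold)
  finally show ?thesis .
qed

lemma int_ind:
  fixes f :: "'x obs \<Rightarrow> real"
  assumes "integrable M f" "S \<in> sets borel"
  shows "integrable M (\<lambda>z. indicator S (outc z) * f z)"
proof (rule Bochner_Integration.integrable_bound[OF assms(1)])
  have [measurable]: "f \<in> borel_measurable M" using assms(1) by auto
  have [measurable]: "S \<in> sets borel" by fact
  show "(\<lambda>z. indicator S (outc z) * f z) \<in> borel_measurable M" by measurable
  show "AE x in M. norm (indicator S (outc x) * f x) \<le> norm (f x)"
    by (intro AE_I2) (auto simp: indicator_def)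
qed

lemma Y_set_eq:
  assumes I1: "integrable M (\<lambda>z. rho_ATE pib (act z) (ctx z) * outc z)"
    and I2: "integrable M (\<lambda>z. w_ATE MX px py pib (outc z) * outc z)"
    and S[measurable]: "S \<in> sets borel"
  shows "(\<integral>z. indicator S (outc z) * (rho_ATE pib (act z) (ctx z) * outc z) \<partial>M)
       = (\<integral>z. indicator S (outc z) * (w_ATE MX px py pib (outc z) * outc z) \<partial>M)"
proof -
  let ?w = "w_ATE MX px py pib"
  have "(\<integral>z. indicator S (outc z) * (rho_ATE pib (act z) (ctx z) * outc z) \<partial>M)
      = (\<integral>y. (\<integral>xa. J (xa, y) * (indicator S y * (rho_ATE pib (snd xa) (fst xa) * y)) \<partial>XA) \<partial>lborel)"
    using GIy[OF int_ind[OF I1 S]] by (simp add: outc_def act_def ctx_def)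
  also have "\<dots> = (\<integral>y. (indicator S y * y) * q1 y \<partial>lborel)"
  proof (rule Bochner_Integration.integral_cong[OF refl])
    fix y
    have "(\<integral>xa. J (xa, y) * (indicator S y * (rho_ATE pib (snd xa) (fst xa) * y)) \<partial>XA)
        = (\<integral>xa. (indicator S y * y) * (J (xa, y) * rho_ATE pib (snd xa) (fst xa)) \<partial>XA)"
      by (simp add: mult_ac)
    also have "\<dots> = (indicator S y * y) * q1 y" unfolding q1_def by (rule integral_mult_right_zero)
    finally show "(\<integral>xa. J (xa, y) * (indicator S y * (rho_ATE pib (snd xa) (fst xa) * y)) \<partial>XA) = (indicator S y * y) * q1 y" .
  qed
  also have "\<dots> = (\<integral>y. (indicator S y * y * ?w y) * q0 y \<partial>lborel)"
  proof (rule integral_cong_AE)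
    show "(\<lambda>y. (indicator S y * y) * q1 y) \<in> borel_measurable lborel" by measurable
    show "(\<lambda>y. (indicator S y * y * ?w y) * q0 y) \<in> borel_measurable lborel" by measurable
    show "AE y in lborel. (indicator S y * y) * q1 y = (indicator S y * y * ?w y) * q0 y"
      using key_AE by eventually_elim simp
  qed
  also have "\<dots> = (\<integral>y. (\<integral>xa. J (xa, y) * (indicator S y * (?w y * y)) \<partial>XA) \<partial>lborel)"
  proof (rule Bochner_Integration.integral_cong[OF refl])
    fix y
    have "(\<integral>xa. J (xa, y) * (indicator S y * (?w y * y)) \<partial>XA)
        = (\<integral>xa. J (xa, y) * (indicator S y * y * ?w y) \<partial>XA)"
      by (simp add: mult_ac)
    also have "\<dots> = q0 y * (indicator S y * y * ?w y)" unfolding q0_def by (rule integral_mult_left_zero)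
    finally show "(indicator S y * y * ?w y) * q0 y = (\<integral>xa. J (xa, y) * (indicator S y * (?w y * y)) \<partial>XA)"
      by (simp add: q0_def mult_ac)
  qed
  also have "\<dots> = (\<integral>z. indicator S (outc z) * (?w (outc z) * outc z) \<partial>M)"
    using GIy[OF int_ind[OF I2 S]] by (simp add: outc_def act_def ctx_def)
  finally show ?thesis .
qed
end



lemma sub_vimage:
  assumes f: "f \<in> M \<rightarrow>\<^sub>M N"
  shows "subalgebra M (vimage_algebra (space M) f N)"
proof -
  have fs: "f \<in> space M \<rightarrow> space N" using measurable_space[OF f] by auto
  show ?thesis unfolding subalgebra_def
    using sets_vimage_algebra2[OF fs] measurable_sets[OF f] by auto
qed

lemma L2_prod:
  fixes f g :: "'a \<Rightarrow> real"
  assumes [measurable]: "f \<in> borel_measurable M" "g \<in> borel_measurable M"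
    and "integrable M (\<lambda>z. (f z)\<^sup>2)" "integrable M (\<lambda>z. (g z)\<^sup>2)"
  shows "integrable M (\<lambda>z. f z * g z)"
proof (rule Bochner_Integration.integrable_bound[OF Bochner_Integration.integrable_add[OF assms(3,4)]])
  show "(\<lambda>z. f z * g z) \<in> borel_measurable M" by measurable
  show "AE x in M. norm (f x * g x) \<le> norm ((f x)\<^sup>2 + (g x)\<^sup>2)"
  proof (rule AE_I2)
    fix x
    have "2 * \<bar>f x * g x\<bar> \<le> (f x)\<^sup>2 + (g x)\<^sup>2"
      using sum_squares_bound[of "\<bar>f x\<bar>" "\<bar>g x\<bar>"] by (simp add: abs_mult power2_abs)
    then show "norm (f x * g x) \<le> norm ((f x)\<^sup>2 + (g x)\<^sup>2)" by simp
  qed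
qed

lemma L2_diff:
  fixes f g :: "'a \<Rightarrow> real"
  assumes [measurable]: "f \<in> borel_measurable M" "g \<in> borel_measurable M"
    and "integrable M (\<lambda>z. (f z)\<^sup>2)" "integrable M (\<lambda>z. (g z)\<^sup>2)"
  shows "integrable M (\<lambda>z. (f z - g z)\<^sup>2)"
    "(\<integral>z. (f z - g z)\<^sup>2 \<partial>M) = (\<integral>z. (f z)\<^sup>2 \<partial>M) - 2 * (\<integral>z. f z * g z \<partial>M) + (\<integral>z. (g z)\<^sup>2 \<partial>M)"
proof -
  have fg: "integrable M (\<lambda>z. f z * g z)" by (rule L2_prod[OF assms])
  have eq: "(\<lambda>z. (f z - g z)\<^sup>2) = (\<lambda>z. ((f z)\<^sup>2 - 2 * (f z * g z)) + (g z)\<^sup>2)"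
    by (auto simp: power2_eq_square algebra_simps)
  show "integrable M (\<lambda>z. (f z - g z)\<^sup>2)" unfolding eq using fg assms(3,4) by auto
  show "(\<integral>z. (f z - g z)\<^sup>2 \<partial>M) = (\<integral>z. (f z)\<^sup>2 \<partial>M) - 2 * (\<integral>z. f z * g z \<partial>M) + (\<integral>z. (g z)\<^sup>2 \<partial>M)"
    unfolding eq using fg assms(3,4) by simp
qed

lemma L2_sum:
  fixes f g :: "'a \<Rightarrow> real"
  assumes [measurable]: "f \<in> borel_measurable M" "g \<in> borel_measurable M"
    and "integrable M (\<lambda>z. (f z)\<^sup>2)" "integrable M (\<lambda>z. (g z)\<^sup>2)"
  shows "integrable M (\<lambda>z. (f z + g z)\<^sup>2)"
proof -
  have fg: "integrable M (\<lambda>z. f z * g z)" by (rule L2_prod[OF assms])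
  have eq: "(\<lambda>z. (f z + g z)\<^sup>2) = (\<lambda>z. ((f z)\<^sup>2 + 2 * (f z * g z)) + (g z)\<^sup>2)"
    by (auto simp: power2_eq_square algebra_simps)
  show ?thesis unfolding eq using fg assms(3,4) by auto
qed

lemma L2_int:
  fixes f :: "'a \<Rightarrow> real"
  assumes "prob_space M" "f \<in> borel_measurable M" "integrable M (\<lambda>z. (f z)\<^sup>2)"
  shows "integrable M f"
proof -
  interpret prob_space M by fact
  show ?thesis using square_integrable_imp_integrable assms(2,3) by blast
qed

lemma var_expand:
  fixes f :: "'a \<Rightarrow> real"
  assumes P: "prob_space M" and [measurable]: "f \<in> borel_measurable M" and f2: "integrable M (\<lambda>z. (f z)\<^sup>2)"
  shows "Var M f = (\<integral>z. (f z)\<^sup>2 \<partial>M) - (\<integral>z. f z \<partial>M)\<^sup>2"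
proof -
  interpret prob_space M by fact
  have f1: "integrable M f" using L2_int[OF P _ f2] by simp
  let ?c = "\<integral>z. f z \<partial>M"
  have eq: "(\<lambda>z. (f z - ?c)\<^sup>2) = (\<lambda>z. ((f z)\<^sup>2 - (2 * ?c) * f z) + ?c\<^sup>2)"
    by (auto simp: power2_eq_square algebra_simps)
  have "Var M f = (\<integral>z. ((f z)\<^sup>2 - (2 * ?c) * f z) + ?c\<^sup>2 \<partial>M)" unfolding Var_def eq ..
  also have "\<dots> = (\<integral>z. (f z)\<^sup>2 \<partial>M) - (2 * ?c) * ?c + ?c\<^sup>2"
    using f1 f2 by (simp add: prob_space)
  also have "\<dots> = (\<integral>z. (f z)\<^sup>2 \<partial>M) - ?c\<^sup>2" by (simp add: power2_eq_square)
  finally show ?thesis .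
qed



context setting begin

lemma main:
  fixes muh :: "bool \<Rightarrow> 'x \<Rightarrow> real" and n :: nat
  assumes muh_meas[measurable]: "\<And>a. muh a \<in> borel_measurable MX"
    and n_pos: "n > 0"
    and sq1: "integrable M (\<lambda>z. (rho_ATE pib (act z) (ctx z) * outc z)\<^sup>2)"
    and sq2: "integrable M (\<lambda>z. (rho_ATE pib (act z) (ctx z) * muh (act z) (ctx z))\<^sup>2)"
    and sq3: "\<And>a. integrable M (\<lambda>z. (muh a (ctx z))\<^sup>2)"
    and sq4: "integrable M (\<lambda>z. (w_ATE MX px py pib (outc z) * outc z)\<^sup>2)"
    and sq5: "integrable M (\<lambda>z. (rho_ATE pib (act z) (ctx z) * mu_reg py (act z) (ctx z))\<^sup>2)"
  shows "Var (sample_dist n M) (ATE_DR n pib muh)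
           - Var (sample_dist n M) (ATE_MR n (w_ATE MX px py pib))
         \<ge> (1 / real n) *
           (\<integral>z. cond_var M (sigma_Y M) (\<lambda>z. rho_ATE pib (act z) (ctx z) * outc z) z
                - cond_var M (sigma_X MX M) (\<lambda>z. rho_ATE pib (act z) (ctx z) * mu_reg py (act z) (ctx z)) z \<partial>M)"
proof -
  have toM: "h \<in> borel_measurable M" if "h \<in> borel_measurable B" for h :: "'x obs \<Rightarrow> real"
    using that by (simp only: measurable_cong_sets[OF sets_M refl])
  define f where "f = (\<lambda>z. rho_ATE pib (act z) (ctx z) * outc z)"
  define G where "G = (\<lambda>a x. rho_ATE pib a x * muh a x - (muh True x - muh False x))"
  define g where "g = (\<lambda>z. G (act z) (ctx z))"
  define r where "r = (\<lambda>z. rho_ATE pib (act z) (ctx z) * mu_reg py (act z) (ctx z))"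
  define W where "W = (\<lambda>z::'x obs. w_ATE MX px py pib (outc z) * outc z)"
  define D where "D = (\<lambda>z. f z - g z)"
  have [measurable]: "rho_ATE pib a \<in> borel_measurable MX" for a unfolding rho_ATE_def by measurable
  have Gm: "G a \<in> borel_measurable MX" for a unfolding G_def by measurable
  have fm[measurable]: "f \<in> borel_measurable M" unfolding f_def by (rule toM) measurable
  have gm[measurable]: "g \<in> borel_measurable M" unfolding g_def by (rule toM, rule split_meas, rule Gm)
  have rm[measurable]: "r \<in> borel_measurable M" unfolding r_def
    by (rule toM, rule split_meas[of "\<lambda>a x. rho_ATE pib a x * mu_reg py a x", simplified]) measurable
  have wb[measurable]: "w_ATE MX px py pib \<in> borel_measurable borel"
    using w_meas by (simp only: measurable_cong_sets[OF sets_lborel refl])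
  have Wm[measurable]: "W \<in> borel_measurable M" unfolding W_def by (rule toM) measurable
  have Dm[measurable]: "D \<in> borel_measurable M" unfolding D_def by measurable
  have a1m[measurable]: "(\<lambda>z. rho_ATE pib (act z) (ctx z) * muh (act z) (ctx z)) \<in> borel_measurable M"
    by (rule toM, rule split_meas[of "\<lambda>a x. rho_ATE pib a x * muh a x", simplified]) measurable
  have muhm[measurable]: "(\<lambda>z. muh a (ctx z)) \<in> borel_measurable M" for a by (rule toM) measurable
  have f2: "integrable M (\<lambda>z. (f z)\<^sup>2)" using sq1 unfolding f_def .
  have r2: "integrable M (\<lambda>z. (r z)\<^sup>2)" using sq5 unfolding r_def .
  have W2: "integrable M (\<lambda>z. (W z)\<^sup>2)" using sq4 unfolding W_def .
  have g2: "integrable M (\<lambda>z. (g z)\<^sup>2)"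
  proof -
    have d2: "integrable M (\<lambda>z. (muh True (ctx z) - muh False (ctx z))\<^sup>2)"
      by (rule L2_diff(1)) (auto intro: sq3)
    have "integrable M (\<lambda>z. (rho_ATE pib (act z) (ctx z) * muh (act z) (ctx z) - (muh True (ctx z) - muh False (ctx z)))\<^sup>2)"
      by (rule L2_diff(1)) (auto intro: sq2 d2)
    then show ?thesis unfolding g_def G_def .
  qed
  have D2: "integrable M (\<lambda>z. (D z)\<^sup>2)" unfolding D_def by (rule L2_diff(1)[OF fm gm f2 g2])
  have f1: "integrable M f" by (rule L2_int[OF prob fm f2])
  have g1: "integrable M g" by (rule L2_int[OF prob gm g2])
  have r1: "integrable M r" by (rule L2_int[OF prob rm r2])
  have W1: "integrable M W" by (rule L2_int[OF prob Wm W2])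

  have subY: "subalgebra M (sigma_Y M)" unfolding sigma_Y_def by (rule sub_vimage) measurable
  interpret FY: finite_measure_subalgebra M "sigma_Y M"
    by (intro finite_measure_subalgebra.intro P.finite_measure_axioms finite_measure_subalgebra_axioms.intro subY)
  have outcY: "outc \<in> sigma_Y M \<rightarrow>\<^sub>M borel" unfolding sigma_Y_def
    by (rule measurable_vimage_algebra1) simp
  have WY[measurable]: "W \<in> borel_measurable (sigma_Y M)"
  proof -
    have "(\<lambda>y. w_ATE MX px py pib y * y) \<in> borel_measurable borel" by measurable
    from measurable_compose[OF outcY this] show ?thesis unfolding W_def .
  qed
  define cY where "cY = real_cond_exp M (sigma_Y M) f"
  have cYm[measurable]: "cY \<in> borel_measurable M" unfolding cY_def by simp
  have cYW: "AE z in M. cY z = W z" unfolding cY_def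
  proof (rule FY.real_cond_exp_charact[OF _ f1 W1 WY])
    fix A assume "A \<in> sets (sigma_Y M)"
    then obtain S where S: "S \<in> sets borel" and A: "A = outc -` S \<inter> space M"
      unfolding sigma_Y_def using sets_vimage_algebra2[of outc "space M" borel] by auto
    have ind: "z \<in> space M \<Longrightarrow> indicator A z = indicator S (outc z)" for z
      unfolding A by (simp add: indicator_def)
    have "(\<integral>z\<in>A. f z \<partial>M) = (\<integral>z. indicator S (outc z) * f z \<partial>M)"
      unfolding set_lebesgue_integral_def by (rule Bochner_Integration.integral_cong) (auto simp: ind)
    also have "\<dots> = (\<integral>z. indicator S (outc z) * W z \<partial>M)"
      using Y_set_eq[OF f1[unfolded f_def] W1[unfolded W_def] S] unfolding f_def W_def .
    also have "\<dots> = (\<integral>z\<in>A. W z \<partial>M)"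
      unfolding set_lebesgue_integral_def by (rule Bochner_Integration.integral_cong) (auto simp: ind)
    finally show "(\<integral>z\<in>A. f z \<partial>M) = (\<integral>z\<in>A. W z \<partial>M)" .
  qed
  have fW: "integrable M (\<lambda>z. W z * f z)" by (rule L2_prod[OF Wm fm W2 f2])
  have fcY2: "integrable M (\<lambda>z. (f z - cY z)\<^sup>2)"
  proof -
    have "integrable M (\<lambda>z. (f z - W z)\<^sup>2)" by (rule L2_diff(1)[OF fm Wm f2 W2])
    then show ?thesis
      by (rule integrable_cong_AE_imp) (use cYW in auto)
  qed
  have Ecv1: "(\<integral>z. cond_var M (sigma_Y M) f z \<partial>M) = (\<integral>z. (f z)\<^sup>2 \<partial>M) - (\<integral>z. (W z)\<^sup>2 \<partial>M)"
  proof -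
    have "(\<integral>z. cond_var M (sigma_Y M) f z \<partial>M) = (\<integral>z. (f z - cY z)\<^sup>2 \<partial>M)"
      unfolding cond_var_def cY_def[symmetric] by (rule FY.real_cond_exp_int(2)[OF fcY2])
    also have "\<dots> = (\<integral>z. (f z - W z)\<^sup>2 \<partial>M)"
      by (rule integral_cong_AE) (use cYW in auto)
    also have "\<dots> = (\<integral>z. (f z)\<^sup>2 \<partial>M) - 2 * (\<integral>z. f z * W z \<partial>M) + (\<integral>z. (W z)\<^sup>2 \<partial>M)"
      by (rule L2_diff(2)[OF fm Wm f2 W2])
    also have "(\<integral>z. f z * W z \<partial>M) = (\<integral>z. (W z)\<^sup>2 \<partial>M)"
    proof -
      have "(\<integral>z. f z * W z \<partial>M) = (\<integral>z. W z * f z \<partial>M)" by (simp add: mult.commute)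
      also have "\<dots> = (\<integral>z. W z * cY z \<partial>M)"
        unfolding cY_def by (rule FY.real_cond_exp_intg(2)[OF fW WY fm, symmetric])
      also have "\<dots> = (\<integral>z. (W z)\<^sup>2 \<partial>M)"
        by (rule integral_cong_AE) (use cYW in \<open>auto simp: power2_eq_square\<close>)
      finally show ?thesis .
    qed
    finally show ?thesis by simp
  qed
  have EfW: "(\<integral>z. W z \<partial>M) = (\<integral>z. f z \<partial>M)"
  proof -
    have "(\<integral>z. W z \<partial>M) = (\<integral>z. cY z \<partial>M)"
      by (rule integral_cong_AE) (use cYW in auto)
    also have "\<dots> = (\<integral>z. f z \<partial>M)" unfolding cY_def by (rule FY.real_cond_exp_int(2)[OF f1])
    finally show ?thesis .
  qed
  have cv1_int: "integrable M (cond_var M (sigma_Y M) f)"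
    unfolding cond_var_def cY_def[symmetric] by (rule FY.real_cond_exp_int(1)[OF fcY2])

  have subX: "subalgebra M (sigma_X MX M)" unfolding sigma_X_def by (rule sub_vimage) measurable
  interpret FX: finite_measure_subalgebra M "sigma_X MX M"
    by (intro finite_measure_subalgebra.intro P.finite_measure_axioms finite_measure_subalgebra_axioms.intro subX)
  define k where "k = real_cond_exp M (sigma_X MX M) r"
  have km[measurable]: "k \<in> borel_measurable M" unfolding k_def by simp
  have kX[measurable]: "k \<in> borel_measurable (sigma_X MX M)" unfolding k_def by simp
  have k2: "integrable M (\<lambda>z. (k z)\<^sup>2)" unfolding k_def
    by (rule FX.integrable_convex_cond_exp[where I = UNIV and q = "\<lambda>x. x\<^sup>2"])
       (auto simp: r1 r2 convex_power_even)
  define h where "h = (\<lambda>z. r z - k z)"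
  have hm[measurable]: "h \<in> borel_measurable M" unfolding h_def by measurable
  have h2: "integrable M (\<lambda>z. (h z)\<^sup>2)" unfolding h_def by (rule L2_diff(1)[OF rm km r2 k2])
  have Ecv2: "(\<integral>z. cond_var M (sigma_X MX M) r z \<partial>M) = (\<integral>z. (h z)\<^sup>2 \<partial>M)"
    unfolding cond_var_def k_def[symmetric] h_def by (rule FX.real_cond_exp_int(2)[OF h2[unfolded h_def]])
  have cv2_int: "integrable M (cond_var M (sigma_X MX M) r)"
    unfolding cond_var_def k_def[symmetric] by (rule FX.real_cond_exp_int(1)[OF h2[unfolded h_def]])
  have cg0: "AE z in M. real_cond_exp M (sigma_X MX M) g z = 0"
  proof (rule FX.real_cond_exp_charact[OF _ g1])
    fix A
    have cs: "ctx \<in> space M \<rightarrow> space MX"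
      unfolding space_M using measurable_space[OF ctx_meas[of MX]] by auto
    assume "A \<in> sets (sigma_X MX M)"
    then obtain S where S[measurable]: "S \<in> sets MX" and A: "A = ctx -` S \<inter> space M"
      unfolding sigma_X_def sets_vimage_algebra2[OF cs] by auto
    have ind: "z \<in> space M \<Longrightarrow> indicator A z = indicator S (ctx z)" for z
      unfolding A by (simp add: indicator_def)
    have "(\<integral>z\<in>A. g z \<partial>M) = (\<integral>z. indicator S (ctx z) * G (act z) (ctx z) \<partial>M)"
      unfolding set_lebesgue_integral_def g_def by (rule Bochner_Integration.integral_cong) (auto simp: ind)
    also have "\<dots> = (\<integral>x. px x * (pib True x * (indicator S x * G True x) + pib False x * (indicator S x * G False x)) \<partial>MX)"
    proof (rule GI_H[of "\<lambda>a x. indicator S x * G a x"])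
      show "integrable M (\<lambda>z. indicator S (ctx z) * G (act z) (ctx z))"
      proof (rule Bochner_Integration.integrable_bound[OF g1])
        show "(\<lambda>z. indicator S (ctx z) * G (act z) (ctx z)) \<in> borel_measurable M"
          using gm unfolding g_def by measurable
        show "AE x in M. norm (indicator S (ctx x) * G (act x) (ctx x)) \<le> norm (g x)"
          by (intro AE_I2) (auto simp: indicator_def g_def)
      qed
    qed
    also have "\<dots> = (\<integral>x. 0 \<partial>MX)"
    proof (rule Bochner_Integration.integral_cong[OF refl])
      fix x assume x: "x \<in> space MX"
      have s: "pib True x + pib False x = 1" by (rule pib_sum[OF x])
      have t: "pib True x \<noteq> 0" "pib False x \<noteq> 0" using pib_pos[OF x, of True] pib_pos[OF x, of False] by auto
      have g1: "pib True x * G True x = muh True x - pib True x * (muh True x - muh False x)"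
        using t by (simp add: G_def rho_ATE_def right_diff_distrib)
      have g2: "pib False x * G False x = - muh False x - pib False x * (muh True x - muh False x)"
        using t by (simp add: G_def rho_ATE_def right_diff_distrib)
      have s2: "pib True x * (muh True x - muh False x) + pib False x * (muh True x - muh False x) = muh True x - muh False x"
        using s by (metis distrib_right mult_1)
      have e: "pib True x * G True x + pib False x * G False x = 0" using g1 g2 s2 by linarith
      have "pib True x * (indicator S x * G True x) + pib False x * (indicator S x * G False x)
          = indicator S x * (pib True x * G True x + pib False x * G False x)" by (simp add: algebra_simps)
      then show "px x * (pib True x * (indicator S x * G True x) + pib False x * (indicator S x * G False x)) = 0"
        using e by simp
    qed
    finally show "(\<integral>z\<in>A. g z \<partial>M) = (\<integral>z\<in>A. 0 \<partial>M)" by simp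
  qed simp_all
  have Eg: "(\<integral>z. g z \<partial>M) = 0"
  proof -
    have "(\<integral>z. g z \<partial>M) = (\<integral>z. real_cond_exp M (sigma_X MX M) g z \<partial>M)"
      by (rule FX.real_cond_exp_int(2)[OF g1, symmetric])
    also have "\<dots> = 0" by (rule integral_eq_zero_AE[OF cg0])
    finally show ?thesis .
  qed
  have kg: "integrable M (\<lambda>z. k z * g z)" by (rule L2_prod[OF km gm k2 g2])
  have Ekg: "(\<integral>z. k z * g z \<partial>M) = 0"
  proof -
    have "(\<integral>z. k z * g z \<partial>M) = (\<integral>z. k z * real_cond_exp M (sigma_X MX M) g z \<partial>M)"
      by (rule FX.real_cond_exp_intg(2)[OF kg kX gm, symmetric])
    also have "\<dots> = 0" by (rule integral_eq_zero_AE) (use cg0 in auto)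
    finally show ?thesis .
  qed
  have fg: "integrable M (\<lambda>z. f z * g z)" by (rule L2_prod[OF fm gm f2 g2])
  have rg: "integrable M (\<lambda>z. r z * g z)" by (rule L2_prod[OF rm gm r2 g2])
  have Efg: "(\<integral>z. f z * g z \<partial>M) = (\<integral>z. r z * g z \<partial>M)"
  proof -
    let ?H = "\<lambda>a x. rho_ATE pib a x * G a x"
    have e1: "\<And>z. f z * g z = ?H (act z) (ctx z) * outc z" by (simp add: f_def g_def mult_ac)
    have e2: "\<And>z. r z * g z = ?H (act z) (ctx z) * mu_reg py (act z) (ctx z)" by (simp add: r_def g_def mult_ac)
    have "(\<integral>z. ?H (act z) (ctx z) * outc z \<partial>M) = (\<integral>z. ?H (act z) (ctx z) * mu_reg py (act z) (ctx z) \<partial>M)"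
      by (rule tower_mu) (use fg rg in \<open>simp_all add: e1[symmetric] e2[symmetric]\<close>)
    then show ?thesis by (simp add: e1 e2)
  qed
  have gh: "(\<integral>z. g z * h z \<partial>M) = (\<integral>z. f z * g z \<partial>M)"
  proof -
    have "(\<integral>z. g z * h z \<partial>M) = (\<integral>z. r z * g z - k z * g z \<partial>M)"
      by (simp add: h_def algebra_simps)
    also have "\<dots> = (\<integral>z. r z * g z \<partial>M) - (\<integral>z. k z * g z \<partial>M)"
      using rg kg by simp
    finally show ?thesis using Ekg Efg by simp
  qed
  have ghnn: "0 \<le> (\<integral>z. (g z)\<^sup>2 \<partial>M) - 2 * (\<integral>z. g z * h z \<partial>M) + (\<integral>z. (h z)\<^sup>2 \<partial>M)"
  proof -
    have "0 \<le> (\<integral>z. (g z - h z)\<^sup>2 \<partial>M)" by (rule integral_nonneg_AE) simp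
    then show ?thesis using L2_diff(2)[OF gm hm g2 h2] by linarith
  qed

  have VD: "Var M D = (\<integral>z. (f z)\<^sup>2 \<partial>M) - 2 * (\<integral>z. f z * g z \<partial>M) + (\<integral>z. (g z)\<^sup>2 \<partial>M) - (\<integral>z. f z \<partial>M)\<^sup>2"
  proof -
    have "(\<integral>z. D z \<partial>M) = (\<integral>z. f z \<partial>M)" unfolding D_def using f1 g1 Eg by simp
    then show ?thesis using var_expand[OF prob Dm D2] L2_diff(2)[OF fm gm f2 g2] unfolding D_def by simp
  qed
  have VW: "Var M W = (\<integral>z. (W z)\<^sup>2 \<partial>M) - (\<integral>z. f z \<partial>M)\<^sup>2"
    using var_expand[OF prob Wm W2] EfW by simp
  have DR: "ATE_DR n pib muh = (\<lambda>s. (1 / real n) * (\<Sum>i<n. D (s i)))"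
  proof
    fix s
    have Ds: "D (s i) = rho_ATE pib (act (s i)) (ctx (s i)) * (outc (s i) - muh (act (s i)) (ctx (s i)))
                    + (muh True (ctx (s i)) - muh False (ctx (s i)))" for i :: nat
      unfolding D_def f_def g_def G_def by (simp add: right_diff_distrib)
    show "ATE_DR n pib muh s = (1 / real n) * (\<Sum>i<n. D (s i))"
      unfolding ATE_DR_def by (simp only: Ds sum.distrib distrib_left)
  qed
  have MR: "ATE_MR n (w_ATE MX px py pib) = (\<lambda>s. (1 / real n) * (\<Sum>i<n. W (s i)))"
    unfolding ATE_MR_def W_def ..
  have VDR: "Var (sample_dist n M) (ATE_DR n pib muh) = Var M D / real n"
    unfolding DR sample_dist_def by (rule var_iid[OF prob Dm D2 n_pos])
  have VMR: "Var (sample_dist n M) (ATE_MR n (w_ATE MX px py pib)) = Var M W / real n"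
    unfolding MR sample_dist_def by (rule var_iid[OF prob Wm W2 n_pos])
  have RHS: "(\<integral>z. cond_var M (sigma_Y M) f z - cond_var M (sigma_X MX M) r z \<partial>M)
      = (\<integral>z. (f z)\<^sup>2 \<partial>M) - (\<integral>z. (W z)\<^sup>2 \<partial>M) - (\<integral>z. (h z)\<^sup>2 \<partial>M)"
    using cv1_int cv2_int Ecv1 Ecv2 by simp
  have ineq: "Var M D - Var M W \<ge> (\<integral>z. cond_var M (sigma_Y M) f z - cond_var M (sigma_X MX M) r z \<partial>M)"
    unfolding RHS VD VW using ghnn gh by linarith
  have "Var (sample_dist n M) (ATE_DR n pib muh) - Var (sample_dist n M) (ATE_MR n (w_ATE MX px py pib))
      = (1 / real n) * (Var M D - Var M W)"
    unfolding VDR VMR by (simp add: diff_divide_distrib)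
  also have "\<dots> \<ge> (1 / real n) * (\<integral>z. cond_var M (sigma_Y M) f z - cond_var M (sigma_X MX M) r z \<partial>M)"
    using ineq n_pos by (intro mult_left_mono) auto
  finally show ?thesis unfolding f_def r_def .
qed

end

theorem propositionA6:
  fixes MX :: "'x measure"
    and px :: "'x \<Rightarrow> real"
    and py :: "'x \<Rightarrow> bool \<Rightarrow> real \<Rightarrow> real"
    and pib :: "bool \<Rightarrow> 'x \<Rightarrow> real"
    and muh :: "bool \<Rightarrow> 'x \<Rightarrow> real"
    and n :: nat
  defines "M \<equiv> obs_dist MX px py pib"
  assumes MX: "sigma_finite_measure MX"
    and px_meas: "px \<in> borel_measurable MX"
    and px_nonneg: "\<And>x. x \<in> space MX \<Longrightarrow> px x \<ge> 0"
    and px_int: "(\<integral>\<^sup>+x. ennreal (px x) \<partial>MX) = 1"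
    and py_meas: "(\<lambda>z. py (ctx z) (act z) (outc z)) \<in> borel_measurable (base MX)"
    and py_nonneg: "\<And>x a y. x \<in> space MX \<Longrightarrow> py x a y \<ge> 0"
    and py_int: "\<And>x a. x \<in> space MX \<Longrightarrow> (\<integral>\<^sup>+y. ennreal (py x a y) \<partial>lborel) = 1"
    and pib_meas: "\<And>a. pib a \<in> borel_measurable MX"
    and pib_pos: "\<And>a x. x \<in> space MX \<Longrightarrow> pib a x > 0"
    and pib_sum: "\<And>x. x \<in> space MX \<Longrightarrow> pib True x + pib False x = 1"
    and muh_meas: "\<And>a. muh a \<in> borel_measurable MX"
    and n_pos: "n > 0"
    and sq1: "integrable M (\<lambda>z. (rho_ATE pib (act z) (ctx z) * outc z)\<^sup>2)"
    and sq2: "integrable M (\<lambda>z. (rho_ATE pib (act z) (ctx z) * muh (act z) (ctx z))\<^sup>2)"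
    and sq3: "\<And>a. integrable M (\<lambda>z. (muh a (ctx z))\<^sup>2)"
    and sq4: "integrable M (\<lambda>z. (w_ATE MX px py pib (outc z) * outc z)\<^sup>2)"
    and sq5: "integrable M (\<lambda>z. (rho_ATE pib (act z) (ctx z) * mu_reg py (act z) (ctx z))\<^sup>2)"
  shows "Var (sample_dist n M) (ATE_DR n pib muh)
           - Var (sample_dist n M) (ATE_MR n (w_ATE MX px py pib))
         \<ge> (1 / real n) *
           (\<integral>z. cond_var M (sigma_Y M) (\<lambda>z. rho_ATE pib (act z) (ctx z) * outc z) z
                - cond_var M (sigma_X MX M) (\<lambda>z. rho_ATE pib (act z) (ctx z) * mu_reg py (act z) (ctx z)) z \<partial>M)"
  proof -
  interpret setting MX px py pib
    by (rule setting.intro[OF MX px_meas px_nonneg px_int py_meas py_nonneg py_int pib_meas pib_pos pib_sum])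
  show ?thesis unfolding M_def
    by (rule main[OF muh_meas n_pos sq1[unfolded M_def] sq2[unfolded M_def] sq3[unfolded M_def]
                     sq4[unfolded M_def] sq5[unfolded M_def]])
qed

end
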